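(* Let $\Psi\in\Delta_7$ be a spinor of unit length and let $\omega^3\in\Lambda^3(\mathbb{R}^7)$ be defined by $\omega^3(X,Y,Z):=-\big(X\cdot Y\cdot Z\cdot\Psi,\Psi\big)$. Let $p,q,r\in\mathbb{R}$. Then the equation $$\Big(X+\tfrac r4\,(X\lrcorner\omega^3)+p\,(X\lrcorner *\omega^3)+q\,(X\wedge *\omega^3)\Big)\cdot\Psi=0$$ holds for all vectors $X\in\mathbb{R}^7$ if and only if $16p=-4+12q-3r$.
   Context: $\mathbb{R}^7$ carries the Euclidean metric; $\Delta_7$ is the real $8$-dimensional spin representation with $\mathrm{Spin}(7)$-invariant inner product $(\cdot,\cdot)$ for which Clifford multiplication by vectors is skew-symmetric; Clifford multiplication satisfies $X\cdot X=-|X|^2$, and $k$-forms act by Clifford multiplication ($e_{i_1}\wedge\cdots\wedge e_{i_k}\mapsto e_{i_1}\cdots e_{i_k}$ for an orthonormal basis, distinct indices). For such $\Psi$ one has $\omega^3\cdot\Psi=-7\Psi$. $*$ is the Hodge star of the Euclidean metric for the orientation of $\mathbb{R}^7$ fixed by the chosen realization of the spin representation; with this orientation $( *\omega^3)\cdot\Psi=-7\Psi$. *)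

theory Defs
  imports "HOL-Analysis.Analysis"
begin

text \<open>R^7 is real^7 with orthonormal basis e_0,...,e_6 (coordinate i of X is
  X $ of_nat i). The spin representation Delta_7 is realised as real^8 with its standard inner
  product; Clifford multiplication by e_i is the matrix gamma i (i < 7).
  Differential forms are represented by their components: a k-form alpha is a function
  nat list => real, alpha [i1,...,ik] = alpha(e_i1,...,e_ik).\<close>

definition coord7 :: "real^7 \<Rightarrow> nat \<Rightarrow> real" where
  "coord7 X i = X $ (of_nat i :: 7)"

definition gprod :: "(nat \<Rightarrow> real^8^8) \<Rightarrow> nat list \<Rightarrow> real^8^8" where
  "gprod gamma xs = foldr (\<lambda>i M. gamma i ** M) xs (mat 1)"

definition cliff_vec :: "(nat \<Rightarrow> real^8^8) \<Rightarrow> real^7 \<Rightarrow> real^8^8" where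
  "cliff_vec gamma X = (\<Sum>i<7. coord7 X i *\<^sub>R gamma i)"

text \<open>Clifford action of a k-form: e_i1 /\ ... /\ e_ik (i1<...<ik) acts as gamma_i1 ... gamma_ik.\<close>
definition form_act :: "(nat \<Rightarrow> real^8^8) \<Rightarrow> nat \<Rightarrow> (nat list \<Rightarrow> real) \<Rightarrow> real^8^8" where
  "form_act gamma k alpha =
     (\<Sum>I\<in>{I. I \<subseteq> {..<7} \<and> card I = k}.
        alpha (sorted_list_of_set I) *\<^sub>R gprod gamma (sorted_list_of_set I))"

definition omega3 :: "(nat \<Rightarrow> real^8^8) \<Rightarrow> real^8 \<Rightarrow> nat list \<Rightarrow> real" where
  "omega3 gamma Psi l = - ((gprod gamma l *v Psi) \<bullet> Psi)"

definition contr :: "real^7 \<Rightarrow> (nat list \<Rightarrow> real) \<Rightarrow> nat list \<Rightarrow> real" where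
  "contr X alpha l = (\<Sum>a<7. coord7 X a * alpha (a # l))"

definition levi :: "nat list \<Rightarrow> real" where
  "levi xs = (if length xs = 7 \<and> set xs = {..<7}
     then (\<Prod>i<7. \<Prod>j<7. if i < j then sgn (real (xs ! j) - real (xs ! i)) else 1)
     else 0)"

text \<open>Hodge star of a 3-form on R^7 (orientation e_0 /\ ... /\ e_6):
  ( *alpha)_{defg} = 1/3! * sum alpha_{abc} eps_{abcdefg}.\<close>
definition hodge3 :: "(nat list \<Rightarrow> real) \<Rightarrow> nat list \<Rightarrow> real" where
  "hodge3 alpha l = (1/6) * (\<Sum>a<7. \<Sum>b<7. \<Sum>c<7. alpha [a,b,c] * levi ([a,b,c] @ l))"

definition wedge1 :: "real^7 \<Rightarrow> (nat list \<Rightarrow> real) \<Rightarrow> nat list \<Rightarrow> real" where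
  "wedge1 X beta l = (\<Sum>s<length l. (-1) ^ s * coord7 X (l ! s) * beta (take s l @ drop (Suc s) l))"

end

theory Submission imports Defs "HOL-Combinatorics.Multiset_Permutations" begin

lemma mm_add_rdistrib: "((A::real^'n^'m) + B) ** C = A ** C + B ** C"
  by (simp add: matrix_matrix_mult_def vec_eq_iff algebra_simps sum.distrib)

lemma mm_neg_left: "(- (A::real^'n^'m)) ** C = - (A ** C)"
  by (simp add: matrix_matrix_mult_def vec_eq_iff sum_negf)

lemma mm_neg_right: "(A::real^'n^'m) ** (- C) = - (A ** C)"
  by (simp add: matrix_matrix_mult_def vec_eq_iff sum_negf)

lemma mm_zero_left[simp]: "(0::real^'n^'m) ** C = 0"
  by (simp add: matrix_matrix_mult_def vec_eq_iff)

lemma mm_zero_right[simp]: "(A::real^'n^'m) ** (0::real^'k^'n) = 0"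
  by (simp add: matrix_matrix_mult_def vec_eq_iff)

lemma mm_sum_left: "(\<Sum>i\<in>S. f i :: real^'n^'m) ** C = (\<Sum>i\<in>S. f i ** C)"
  by (induction S rule: infinite_finite_induct) (auto simp: mm_add_rdistrib)

lemma mm_sum_right: "(C::real^'n^'m) ** (\<Sum>i\<in>S. f i) = (\<Sum>i\<in>S. C ** f i)"
  by (induction S rule: infinite_finite_induct) (auto simp: matrix_add_ldistrib)

lemma mv_add_left: "((A::real^'n^'m) + B) *v x = A *v x + B *v x"
  by (simp add: matrix_vector_mult_def vec_eq_iff algebra_simps sum.distrib)

lemma mv_zero_left[simp]: "(0::real^'n^'m) *v x = 0"
  by (simp add: matrix_vector_mult_def vec_eq_iff)

lemma mv_sum_left: "(\<Sum>i\<in>S. f i :: real^'n^'m) *v x = (\<Sum>i\<in>S. f i *v x)"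
  by (induction S rule: infinite_finite_induct) (auto simp: mv_add_left)

lemma mv_scale_left: "(c *\<^sub>R (A::real^'n^'m)) *v x = c *\<^sub>R (A *v x)"
  by (simp add: matrix_vector_mult_def vec_eq_iff sum_distrib_left algebra_simps)

lemma mv_neg_left: "(- (A::real^'n^'m)) *v x = - (A *v x)"
  by (simp add: matrix_vector_mult_def vec_eq_iff sum_negf)

lemma mm_scaleR_left: "(k *\<^sub>R (A::real^'n^'m)) ** B = k *\<^sub>R (A ** B)"
  by (simp add: scalar_matrix_assoc)
lemma mm_scaleR_right: "(A::real^'n^'m) ** (k *\<^sub>R B) = k *\<^sub>R (A ** B)"
  by (simp add: matrix_scalar_ac scalar_matrix_assoc)

definition sig :: "nat \<Rightarrow> nat list \<Rightarrow> real" where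
  "sig b ys = (-1) ^ length (takeWhile (\<lambda>y. y < b) ys)"

lemma insort_split: "b \<notin> set ys \<Longrightarrow> insort b ys = takeWhile (\<lambda>y. y < b) ys @ b # dropWhile (\<lambda>y. y < b) ys"
  by (induction ys) auto

lemma sig_sq: "sig b ys * sig b ys = 1"
  by (simp add: sig_def flip: power_add)

definition psgn :: "nat list \<Rightarrow> real" where
  "psgn xs = (\<Prod>i<length xs. \<Prod>j<length xs. if i < j then sgn (real (xs ! j) - real (xs ! i)) else 1)"

lemma psgn_Nil[simp]: "psgn [] = 1" by (simp add: psgn_def)

lemma psgn_Cons: "psgn (a # l) = (\<Prod>j<length l. sgn (real (l ! j) - real a)) * psgn l"
  unfolding psgn_def length_Cons prod.lessThan_Suc_shift
  by (simp only: nth_Cons_Suc nth_Cons_0 if_True if_False mult_1_left mult_1_right zero_less_Suc Suc_less_eq not_less_zero less_irrefl prod.neutral_const)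

lemma levi_psgn: "levi xs = (if length xs = 7 \<and> set xs = {..<7} then psgn xs else 0)"
  by (simp add: levi_def psgn_def)

lemma takeWhile_sorted_filter: "sorted xs \<Longrightarrow> takeWhile (\<lambda>y. y < (a::nat)) xs = filter (\<lambda>y. y < a) xs"
proof (induction xs)
  case (Cons x xs)
  show ?case
  proof (cases "x < a")
    case True thus ?thesis using Cons by simp
  next
    case False
    hence "\<forall>y\<in>set xs. \<not> y < a" using Cons.prems by auto
    hence "filter (\<lambda>y. y < a) xs = []" by (simp add: filter_empty_conv)
    thus ?thesis using False by simp
  qed
qed simp

lemma sig_sort: "distinct l \<Longrightarrow> sig a (sort l) = (-1) ^ card {x \<in> set l. x < a}"
proof -
  assume d: "distinct l"
  have "length (takeWhile (\<lambda>y. y < a) (sort l)) = length (filter (\<lambda>y. y < a) (sort l))"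
    by (simp add: takeWhile_sorted_filter)
  also have "\<dots> = length (filter (\<lambda>y. y < a) l)"
    by (metis filter_sort length_sort)
  also have "\<dots> = card {x \<in> set l. x < a}"
    using d by (simp add: distinct_card[symmetric] set_filter)
  finally show ?thesis by (simp add: sig_def)
qed

lemma prod_sgn_sig: "distinct (a # l) \<Longrightarrow> (\<Prod>j<length l. sgn (real (l ! j) - real a)) = sig a (sort l)"
proof -
  assume d: "distinct (a # l)"
  have "(\<Prod>j<length l. sgn (real (l ! j) - real a)) = (\<Prod>x\<in>set l. sgn (real x - real a))"
    using prod.reindex_bij_betw[OF bij_betw_nth[of l "{..<length l}" "set l"], of "\<lambda>x. sgn (real x - real a)"] d
    by simp
  also have "\<dots> = (\<Prod>x\<in>set l. if x < a then -1 else 1)"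
    by (rule prod.cong) (use d in \<open>auto simp: sgn_if\<close>)
  also have "\<dots> = (-1) ^ card {x \<in> set l. x < a}"
    by (simp add: prod.If_cases Int_def conj_commute)
  finally show ?thesis using d by (simp add: sig_sort)
qed

lemma psgn_sq: "distinct xs \<Longrightarrow> psgn xs * psgn xs = 1"
proof (induction xs)
  case (Cons a l)
  have "psgn (a # l) = sig a (sort l) * psgn l" using Cons.prems by (simp add: psgn_Cons prod_sgn_sig)
  hence "psgn (a # l) * psgn (a # l) = (sig a (sort l) * sig a (sort l)) * (psgn l * psgn l)"
    by (simp add: algebra_simps)
  thus ?case using Cons by (simp add: sig_sq)
qed simp

definition Ck :: "nat \<Rightarrow> nat set set" where
  "Ck k = {J. J \<subseteq> {..<7} \<and> card J = k}"

definition Lk :: "nat \<Rightarrow> nat list set" where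
  "Lk k = {xs. set xs \<subseteq> {..<7} \<and> length xs = k}"

lemma finite_Ck[simp]: "finite (Ck k)"
  unfolding Ck_def by (rule finite_subset[of _ "Pow {..<7}"]) auto

lemma finite_Lk[simp]: "finite (Lk k)"
  unfolding Lk_def by (rule finite_lists_length_eq) simp

lemma Ck_finite_mem: "J \<in> Ck k \<Longrightarrow> finite J"
  unfolding Ck_def using finite_subset by blast

lemma RI: "b < 7 \<Longrightarrow> (\<Sum>J\<in>{J\<in>Ck (Suc k). b \<in> J}. f J) = (\<Sum>T\<in>{T\<in>Ck k. b \<notin> T}. f (insert b T))"
proof -
  assume b: "b < 7"
  have "bij_betw (insert b) {T\<in>Ck k. b \<notin> T} {J\<in>Ck (Suc k). b \<in> J}"
  proof (rule bij_betw_byWitness[where f' = "\<lambda>J. J - {b}"])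
    show "\<forall>a\<in>{T \<in> Ck k. b \<notin> T}. insert b a - {b} = a" by auto
    show "\<forall>a'\<in>{J \<in> Ck (Suc k). b \<in> J}. insert b (a' - {b}) = a'" by auto
    show "insert b ` {T \<in> Ck k. b \<notin> T} \<subseteq> {J \<in> Ck (Suc k). b \<in> J}"
      using b by (auto simp: Ck_def card_insert_if finite_subset)
    show "(\<lambda>J. J - {b}) ` {J \<in> Ck (Suc k). b \<in> J} \<subseteq> {T \<in> Ck k. b \<notin> T}"
      by (auto simp: Ck_def)
  qed
  thus ?thesis by (simp add: sum.reindex_bij_betw[symmetric])
qed

lemma Lk_Suc: "(\<Sum>xs\<in>Lk (Suc k). f xs) = (\<Sum>a<7. \<Sum>xs\<in>Lk k. f (a # xs))"
proof -
  have eq: "Lk (Suc k) = (\<lambda>(a, xs). a # xs) ` ({..<7} \<times> Lk k)"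
    by (auto simp: Lk_def length_Suc_conv image_iff)
  have inj: "inj_on (\<lambda>(a, xs). a # xs) ({..<7} \<times> Lk k)"
    by (auto simp: inj_on_def)
  show ?thesis unfolding eq
    by (subst sum.reindex[OF inj]) (simp add: sum.cartesian_product case_prod_beta)
qed

lemma Lk_0: "Lk 0 = {[]}" by (auto simp: Lk_def)

lemma CV:
  fixes F :: "nat list \<Rightarrow> 'a::real_vector"
  assumes "\<And>xs. distinct xs \<Longrightarrow> set xs \<subseteq> {..<7} \<Longrightarrow> length xs = k \<Longrightarrow> F xs = F' (set xs)"
  shows "(\<Sum>xs\<in>Lk k. if distinct xs \<and> P (set xs) then F xs else 0)
         = (\<Sum>U\<in>{U\<in>Ck k. P U}. fact k *\<^sub>R F' U)"
proof -
  have "(\<Sum>xs\<in>Lk k. if distinct xs \<and> P (set xs) then F xs else 0)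
      = (\<Sum>xs\<in>{xs\<in>Lk k. distinct xs \<and> P (set xs)}. F xs)"
    by (simp add: sum.inter_filter)
  also have "{xs\<in>Lk k. distinct xs \<and> P (set xs)} = (\<Union>U\<in>{U\<in>Ck k. P U}. permutations_of_set U)"
    by (auto simp: Lk_def Ck_def permutations_of_set_def distinct_card)
  also have "sum F \<dots> = (\<Sum>U\<in>{U\<in>Ck k. P U}. sum F (permutations_of_set U))"
    apply (rule sum.UNION_disjoint)
      apply (rule finite_subset[OF _ finite_Ck[of k]]) apply blast
     apply simp
    apply (auto simp: permutations_of_set_def)
    done
  also have "\<dots> = (\<Sum>U\<in>{U\<in>Ck k. P U}. fact k *\<^sub>R F' U)"
  proof (rule sum.cong[OF refl])
    fix U assume U: "U \<in> {U\<in>Ck k. P U}"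
    hence fin: "finite U" using Ck_finite_mem by blast
    have "sum F (permutations_of_set U) = (\<Sum>xs\<in>permutations_of_set U. F' U)"
      by (rule sum.cong[OF refl]) (use U in \<open>auto simp: permutations_of_set_def Ck_def distinct_card intro!: assms\<close>)
    also have "\<dots> = fact k *\<^sub>R F' U" using U fin by (simp add: Ck_def sum_constant_scaleR)
    finally show "sum F (permutations_of_set U) = fact k *\<^sub>R F' U" .
  qed
  finally show ?thesis .
qed

locale G7 =
  fixes gamma :: "nat \<Rightarrow> real^8^8" and Psi :: "real^8"
  assumes cl: "\<forall>i<7. \<forall>j<7. gamma i ** gamma j + gamma j ** gamma i
                       = (if i = j then -2 else 0) *\<^sub>R mat 1"
      and sk: "\<forall>i<7. transpose (gamma i) = - gamma i"
      and orient: "gprod gamma [0..<7] = mat 1"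
      and unit: "norm Psi = 1"
begin

abbreviation gp where "gp \<equiv> gprod gamma"

lemma gp_Nil[simp]: "gp [] = mat 1" by (simp add: gprod_def)
lemma gp_Cons[simp]: "gp (a # l) = gamma a ** gp l" by (simp add: gprod_def)
lemma gp_append: "gp (xs @ ys) = gp xs ** gp ys"
  by (induction xs) (auto simp: matrix_mul_assoc)

lemma sq: "i < 7 \<Longrightarrow> gamma i ** gamma i = - mat 1"
proof -
  assume i: "i < 7"
  have h: "gamma i ** gamma i + gamma i ** gamma i = (-2) *\<^sub>R mat 1" using cl i by auto
  have "gamma i ** gamma i = (1/2::real) *\<^sub>R (2 *\<^sub>R (gamma i ** gamma i))" by simp
  also have "\<dots> = (1/2::real) *\<^sub>R ((-2) *\<^sub>R mat 1)" by (subst scaleR_2) (use h in simp)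
  also have "\<dots> = - mat 1" by simp
  finally show ?thesis .
qed

lemma anti: "i < 7 \<Longrightarrow> j < 7 \<Longrightarrow> i \<noteq> j \<Longrightarrow> gamma i ** gamma j = - (gamma j ** gamma i)"
proof -
  assume "i < 7" "j < 7" "i \<noteq> j"
  hence "gamma i ** gamma j + gamma j ** gamma i = 0" using cl by auto
  thus ?thesis by (simp add: eq_neg_iff_add_eq_0)
qed

lemma sq_left: "i < 7 \<Longrightarrow> gamma i ** (gamma i ** A) = - A"
  by (simp add: matrix_mul_assoc sq mm_neg_left)

lemma Gins: "b < 7 \<Longrightarrow> set ys \<subseteq> {..<7} \<Longrightarrow> b \<notin> set ys \<Longrightarrow>
   gamma b ** gp ys = sig b ys *\<^sub>R gp (insort b ys)"
proof (induction ys)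
  case Nil thus ?case by (simp add: sig_def)
next
  case (Cons y ys)
  show ?case
  proof (cases "b \<le> y")
    case True
    hence "\<not> y < b" by simp
    thus ?thesis using True by (simp add: sig_def)
  next
    case False
    hence yb: "y < b" by simp
    have "gamma b ** gp (y # ys) = (gamma b ** gamma y) ** gp ys" by (simp add: matrix_mul_assoc)
    also have "\<dots> = - (gamma y ** (gamma b ** gp ys))"
      using Cons.prems yb by (simp add: anti[of b y] mm_neg_left matrix_mul_assoc)
    also have "\<dots> = - (sig b ys *\<^sub>R (gamma y ** gp (insort b ys)))"
      using Cons by (simp add: mm_scaleR_right)
    also have "\<dots> = sig b (y # ys) *\<^sub>R gp (insort b (y # ys))"
      using yb False by (simp add: sig_def)
    finally show ?thesis .
  qed
qed


lemma Gsort: "distinct xs \<Longrightarrow> set xs \<subseteq> {..<7} \<Longrightarrow> gp xs = psgn xs *\<^sub>R gp (sort xs)"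
proof (induction xs)
  case (Cons a l)
  have "gp (a # l) = gamma a ** gp l" by simp
  also have "\<dots> = psgn l *\<^sub>R (gamma a ** gp (sort l))" using Cons by (simp add: mm_scaleR_right)
  also have "gamma a ** gp (sort l) = sig a (sort l) *\<^sub>R gp (insort a (sort l))"
    using Cons.prems by (intro Gins) auto
  finally show ?case using Cons.prems by (simp add: psgn_Cons prod_sgn_sig)
qed simp

lemma LV: "levi xs *\<^sub>R mat 1 = (if length xs = 7 \<and> set xs = {..<7} then gp xs else 0)"
proof (cases "length xs = 7 \<and> set xs = {..<7}")
  case True
  hence d: "distinct xs" by (metis card_distinct card_lessThan)
  have "sort xs = sorted_list_of_set (set xs)" using d
    by (simp add: sorted_list_of_set_sort_remdups distinct_remdups_id)
  also have "\<dots> = [0..<7]" using True by (simp add: lessThan_atLeast0)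
  finally have "gp xs = psgn xs *\<^sub>R mat 1" using Gsort[OF d] True orient by simp
  moreover have "levi xs = psgn xs" using True by (simp add: levi_psgn)
  ultimately show ?thesis using True by simp
qed (auto simp: levi_psgn)


abbreviation om where "om \<equiv> omega3 gamma Psi"
abbreviation gv where "gv i \<equiv> gamma i *v Psi"

lemma skew_dot: "i < 7 \<Longrightarrow> (gamma i *v v) \<bullet> w = - (v \<bullet> (gamma i *v w))"
proof -
  assume i: "i < 7"
  have "v \<bullet> (gamma i *v w) = (transpose (gamma i) *v v) \<bullet> w"
    by (simp add: transpose_matrix_vector dot_lmul_matrix)
  also have "\<dots> = - ((gamma i *v v) \<bullet> w)" using sk i by (simp add: mv_neg_left)
  finally show ?thesis by simp
qed

lemma self_zero: "i < 7 \<Longrightarrow> (gamma i *v v) \<bullet> v = 0"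
  using skew_dot[of i v v] by (simp add: inner_commute)

lemma gg_self_zero: "i < 7 \<Longrightarrow> j < 7 \<Longrightarrow> i \<noteq> j \<Longrightarrow> (gamma i *v (gamma j *v v)) \<bullet> v = 0"
proof -
  assume ij: "i < 7" "j < 7" "i \<noteq> j"
  have a: "(gamma i *v (gamma j *v v)) \<bullet> v = - ((gamma j *v v) \<bullet> (gamma i *v v))"
    using skew_dot[of i] ij by simp
  have "gamma i *v (gamma j *v v) = - (gamma j *v (gamma i *v v))"
    using anti[OF ij] by (simp add: matrix_vector_mul_assoc mv_neg_left)
  hence "(gamma i *v (gamma j *v v)) \<bullet> v = (gamma i *v v) \<bullet> (gamma j *v v)"
    using skew_dot[of j] ij by simp
  with a show ?thesis by (simp add: inner_commute)
qed

lemma sqv: "i < 7 \<Longrightarrow> gamma i *v (gamma i *v v) = - v"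
  by (simp add: matrix_vector_mul_assoc sq mv_neg_left)

lemma antiv: "i < 7 \<Longrightarrow> j < 7 \<Longrightarrow> i \<noteq> j \<Longrightarrow> gamma i *v (gamma j *v v) = - (gamma j *v (gamma i *v v))"
  by (simp add: matrix_vector_mul_assoc anti[of i j] mv_neg_left)

lemma nPsi: "Psi \<bullet> Psi = 1" using unit by (simp add: norm_eq_1)

lemma o1: "i < 7 \<Longrightarrow> gv i \<bullet> Psi = 0" by (rule self_zero)

lemma o2: "i < 7 \<Longrightarrow> j < 7 \<Longrightarrow> gv i \<bullet> gv j = (if i = j then 1 else 0)"
proof -
  assume ij: "i < 7" "j < 7"
  have a: "gv i \<bullet> gv j = - (Psi \<bullet> (gamma i *v (gamma j *v Psi)))" using skew_dot[of i] ij by simp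
  show ?thesis
  proof (cases "i = j")
    case True
    have "gamma i *v (gamma i *v Psi) = - Psi" using sq[of i] ij
      by (simp add: matrix_vector_mul_assoc mv_neg_left)
    thus ?thesis using a True nPsi by simp
  next
    case False
    thus ?thesis using a gg_self_zero[of i j Psi] ij by (simp add: inner_commute)
  qed
qed

lemma expansion: "v = (v \<bullet> Psi) *\<^sub>R Psi + (\<Sum>k<7. (v \<bullet> gv k) *\<^sub>R gv k)"
proof (rule ccontr)
  define w where "w = v - ((v \<bullet> Psi) *\<^sub>R Psi + (\<Sum>k<7. (v \<bullet> gv k) *\<^sub>R gv k))"
  assume "v \<noteq> (v \<bullet> Psi) *\<^sub>R Psi + (\<Sum>k<7. (v \<bullet> gv k) *\<^sub>R gv k)"
  hence w0: "w \<noteq> 0" by (simp add: w_def)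
  have wP: "w \<bullet> Psi = 0"
    by (simp add: w_def inner_diff_left inner_add_left inner_sum_left o1 nPsi)
  have wg: "w \<bullet> gv j = 0" if j: "j < 7" for j
  proof -
    have "(\<Sum>k<7. (v \<bullet> gv k) *\<^sub>R gv k) \<bullet> gv j = (\<Sum>k<7. (v \<bullet> gv k) * (if k = j then 1 else 0))"
      by (simp add: inner_sum_left o2 j)
    also have "\<dots> = v \<bullet> gv j" using j by (simp add: if_distrib cong: if_cong)
    finally show ?thesis using o1[OF j]
      by (simp add: w_def inner_diff_left inner_add_left inner_commute[of Psi])
  qed
  define S where "S = insert w (insert Psi (gv ` {..<7}))"
  have ww: "w \<bullet> w \<noteq> 0" using w0 by simp
  have injg: "inj_on gv {..<7}"
  proof (rule inj_onI)
    fix i j assume "i \<in> {..<7}" "j \<in> {..<7}" "gv i = gv j"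
    thus "i = j" using o2[of i j] o2[of i i] by (auto split: if_splits)
  qed
  have Pn: "Psi \<notin> gv ` {..<7}" using o1 nPsi by force
  have wn: "w \<notin> insert Psi (gv ` {..<7})"
  proof
    assume "w \<in> insert Psi (gv ` {..<7})"
    then consider "w = Psi" | i where "i < 7" "w = gv i" by auto
    thus False
    proof cases
      case 1 thus False using wP nPsi by simp
    next
      case 2 thus False using wg[of i] o2[of i i] by simp
    qed
  qed
  have cS: "card S = 9"
    using wn Pn injg by (simp add: S_def card_insert_if card_image)
  have "pairwise orthogonal S"
    unfolding S_def pairwise_def orthogonal_def
    using wP wg o1 o2 by (auto simp: inner_commute)
  moreover have "0 \<notin> S" using w0 nPsi o2 by (force simp: S_def)
  ultimately have "independent S" by (rule pairwise_orthogonal_independent)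
  hence "card S \<le> DIM(real^8)" using independent_bound by blast
  thus False using cS by simp
qed

lemma om_vec: "om [a, b, c] = - ((gamma a *v (gamma b *v (gamma c *v Psi))) \<bullet> Psi)"
  by (simp add: omega3_def matrix_vector_mul_assoc)

lemma F1: "b < 7 \<Longrightarrow> j < 7 \<Longrightarrow> b \<noteq> j \<Longrightarrow>
  gamma b *v (gamma j *v Psi) = (\<Sum>k<7. om [b, j, k] *\<^sub>R gv k)"
proof -
  assume bj: "b < 7" "j < 7" "b \<noteq> j"
  let ?v = "gamma b *v (gamma j *v Psi)"
  have "?v \<bullet> Psi = 0" using gg_self_zero[OF bj] .
  moreover have "?v \<bullet> gv k = om [b, j, k]" if k: "k < 7" for k
  proof -
    have "?v = - (gamma j *v gv b)" using anti[OF bj]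
      by (simp add: matrix_vector_mul_assoc mv_neg_left)
    hence "?v \<bullet> gv k = - (gv k \<bullet> (gamma j *v gv b))" by (simp add: inner_commute)
    also have "\<dots> = (gamma j *v gv k) \<bullet> gv b" using skew_dot[of j "gv k" "gv b"] bj by simp
    also have "\<dots> = - ((gamma b *v (gamma j *v gv k)) \<bullet> Psi)"
      using skew_dot[of b "gamma j *v gv k" Psi] bj by (simp add: inner_commute)
    also have "\<dots> = om [b, j, k]" by (simp add: om_vec)
    finally show ?thesis .
  qed
  ultimately show ?thesis using expansion[of ?v] by simp
qed

lemma om_zero: "x < 7 \<Longrightarrow> y < 7 \<Longrightarrow> z < 7 \<Longrightarrow> \<not> distinct [x, y, z] \<Longrightarrow> om [x, y, z] = 0"
proof -
  assume xyz: "x < 7" "y < 7" "z < 7" and nd: "\<not> distinct [x, y, z]"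
  have "\<exists>w<7. \<exists>c::real. gamma x *v (gamma y *v (gamma z *v Psi)) = c *\<^sub>R gv w"
  proof (cases "x = y")
    case True
    have "gamma x *v (gamma y *v (gamma z *v Psi)) = - gv z"
      using sqv[of x] xyz True by simp
    thus ?thesis using xyz by (intro exI[of _ z]) (auto intro: exI[of _ "-1"])
  next
    case False
    show ?thesis
    proof (cases "y = z")
      case True
      have "gamma x *v (gamma y *v (gamma z *v Psi)) = - gv x"
        using sqv[of y] xyz True by (simp add: vec.neg)
      thus ?thesis using xyz by (intro exI[of _ x]) (auto intro: exI[of _ "-1"])
    next
      case False2: False
      hence xz: "x = z" using nd False by auto
      have "gamma x *v (gamma y *v (gamma x *v Psi)) = - (gamma x *v (gamma x *v (gamma y *v Psi)))"
        using antiv[of y x] xyz False by (simp add: vec.neg)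
      also have "\<dots> = gv y" using sqv[of x] xyz by simp
      finally show ?thesis using xyz xz by (intro exI[of _ y]) (auto intro: exI[of _ 1])
    qed
  qed
  then obtain w c where "w < 7" "gamma x *v (gamma y *v (gamma z *v Psi)) = c *\<^sub>R gv w" by blast
  thus ?thesis by (simp add: om_vec o1)
qed

lemma K: "b < 7 \<Longrightarrow> (\<Sum>j<7. \<Sum>k<7. om [b, j, k] *\<^sub>R (gamma j *v (gamma k *v Psi))) = 6 *\<^sub>R gv b"
proof -
  assume b: "b < 7"
  have "(\<Sum>k<7. om [b, j, k] *\<^sub>R (gamma j *v (gamma k *v Psi))) = (if j = b then 0 else gv b)"
    if j: "j < 7" for j
  proof (cases "j = b")
    case True
    thus ?thesis using om_zero[of b b] b by simp
  next
    case False
    have "(\<Sum>k<7. om [b, j, k] *\<^sub>R (gamma j *v (gamma k *v Psi))) = gamma j *v (\<Sum>k<7. om [b, j, k] *\<^sub>R gv k)"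
      by (simp add: vec.sum matrix_vector_mult_scaleR)
    also have "\<dots> = gamma j *v (gamma b *v (gamma j *v Psi))" using F1[of b j] b j False by simp
    also have "\<dots> = gv b"
    proof -
      have "gamma j *v (gamma b *v (gamma j *v Psi)) = - (gamma j *v (gamma j *v (gamma b *v Psi)))"
        using antiv[of b j] b j False by (simp add: vec.neg)
      also have "\<dots> = gv b" using sqv[of j] j by simp
      finally show ?thesis .
    qed
    finally show ?thesis using False by simp
  qed
  hence "(\<Sum>j<7. \<Sum>k<7. om [b, j, k] *\<^sub>R (gamma j *v (gamma k *v Psi))) = (\<Sum>j<7. if j = b then 0 else gv b)"
    by simp
  also have "\<dots> = (\<Sum>j\<in>{..<7} - {b}. gv b)"
    using b by (simp add: sum.If_cases Diff_eq Compl_eq)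
  also have "\<dots> = real (card ({..<7} - {b})) *\<^sub>R gv b" by (rule sum_constant_scaleR)
  also have "card ({..<7::nat} - {b}) = 6" using b by simp
  finally show ?thesis by (metis of_nat_numeral)
qed


end

context G7 begin
abbreviation sl where "sl \<equiv> sorted_list_of_set :: nat set \<Rightarrow> nat list"

definition SS :: "nat \<Rightarrow> (nat set \<Rightarrow> bool) \<Rightarrow> (nat list \<Rightarrow> real) \<Rightarrow> real^8^8" where
  "SS k P \<alpha> = (\<Sum>J\<in>Ck k. if P J then \<alpha> (sl J) *\<^sub>R gp (sl J) else 0)"

lemma form_act_SS: "form_act gamma k \<alpha> = SS k (\<lambda>_. True) \<alpha>"
  by (simp add: form_act_def SS_def Ck_def)

lemma form_act_contr: "form_act gamma k (contr X \<alpha>) = (\<Sum>b<7. coord7 X b *\<^sub>R form_act gamma k (\<lambda>l. \<alpha> (b # l)))"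
  unfolding form_act_def contr_def scaleR_sum_left
  by (subst sum.swap) (simp add: scaleR_right.sum)

lemma Ck_sub: "J \<in> Ck k \<Longrightarrow> J \<subseteq> {..<7}" by (simp add: Ck_def)
lemma Ck_card: "J \<in> Ck k \<Longrightarrow> card J = k" by (simp add: Ck_def)

lemma R3:
  assumes b: "b < 7"
    and Z: "\<And>T. T \<in> Ck k \<Longrightarrow> b \<in> T \<Longrightarrow> \<alpha> (b # sl T) = 0"
    and I: "\<And>T. T \<in> Ck k \<Longrightarrow> b \<notin> T \<Longrightarrow> \<alpha> (b # sl T) = sig b (sl T) * \<alpha> (insort b (sl T))"
  shows "form_act gamma k (\<lambda>l. \<alpha> (b # l)) = - (gamma b ** SS (Suc k) (\<lambda>J. b \<in> J) \<alpha>)"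
proof -
  let ?f = "\<lambda>J. \<alpha> (sl J) *\<^sub>R gp (sl J)"
  have pw: "\<alpha> (b # sl T) *\<^sub>R gp (sl T) = (if b \<notin> T then - (gamma b ** ?f (insert b T)) else 0)"
    if T: "T \<in> Ck k" for T
  proof (cases "b \<in> T")
    case True thus ?thesis using Z[OF T] by simp
  next
    case False
    have fin: "finite T" using Ck_finite_mem[OF T] .
    have ins: "sl (insert b T) = insort b (sl T)" using fin False by (simp add: sorted_list_of_set_insert)
    have G: "gamma b ** gp (sl T) = sig b (sl T) *\<^sub>R gp (insort b (sl T))"
      using Gins[of b "sl T"] b Ck_sub[OF T] fin False by simp
    have "gp (sl T) = - (gamma b ** (gamma b ** gp (sl T)))" by (simp add: sq_left[OF b])
    also have "\<dots> = - (sig b (sl T) *\<^sub>R (gamma b ** gp (insort b (sl T))))"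
      by (simp add: G mm_scaleR_right)
    finally have "\<alpha> (b # sl T) *\<^sub>R gp (sl T) = - ((sig b (sl T) * sig b (sl T)) * \<alpha> (insort b (sl T))) *\<^sub>R (gamma b ** gp (insort b (sl T)))"
      using I[OF T False] by (simp add: algebra_simps)
    thus ?thesis using False ins by (simp add: sig_sq mm_scaleR_right)
  qed
  have "form_act gamma k (\<lambda>l. \<alpha> (b # l)) = (\<Sum>T\<in>Ck k. \<alpha> (b # sl T) *\<^sub>R gp (sl T))"
    by (simp add: form_act_def Ck_def)
  also have "\<dots> = (\<Sum>T\<in>Ck k. if b \<notin> T then - (gamma b ** ?f (insert b T)) else 0)"
    by (rule sum.cong[OF refl]) (rule pw)
  also have "\<dots> = (\<Sum>T\<in>{T\<in>Ck k. b \<notin> T}. - (gamma b ** ?f (insert b T)))"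
    by (simp add: sum.inter_filter)
  also have "\<dots> = - (gamma b ** (\<Sum>T\<in>{T\<in>Ck k. b \<notin> T}. ?f (insert b T)))"
    by (simp add: sum_negf mm_sum_right)
  also have "(\<Sum>T\<in>{T\<in>Ck k. b \<notin> T}. ?f (insert b T)) = (\<Sum>J\<in>{J\<in>Ck (Suc k). b \<in> J}. ?f J)"
    by (rule RI[OF b, symmetric])
  also have "\<dots> = SS (Suc k) (\<lambda>J. b \<in> J) \<alpha>"
    by (simp add: SS_def sum.inter_filter)
  finally show ?thesis .
qed

lemma WP:
  assumes W: "W \<in> Ck (Suc k)" and s: "s < length (sl W)"
  shows "((-1) ^ s * coord7 X (sl W ! s) * \<beta> (take s (sl W) @ drop (Suc s) (sl W))) *\<^sub>R gp (sl W)
       = coord7 X (sl W ! s) *\<^sub>R (gamma (sl W ! s) ** (\<beta> (sl (W - {sl W ! s})) *\<^sub>R gp (sl (W - {sl W ! s}))))"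
proof -
  define b where "b = sl W ! s"
  define V where "V = W - {b}"
  have fin: "finite W" using Ck_finite_mem[OF W] .
  have bW: "b \<in> W" using nth_mem[OF s] fin by (simp add: b_def)
  have b7: "b < 7" using bW Ck_sub[OF W] by auto
  have finV: "finite V" using fin by (simp add: V_def)
  have bV: "b \<notin> set (sl V)" using finV by (simp add: V_def)
  have slW: "sl W = insort b (sl V)"
    using sorted_list_of_set_insert_remove[OF fin, of b] bW by (simp add: V_def insert_absorb)
  define t where "t = length (takeWhile (\<lambda>y. y < b) (sl V))"
  have split: "sl W = takeWhile (\<lambda>y. y < b) (sl V) @ b # dropWhile (\<lambda>y. y < b) (sl V)"
    using slW insort_split[OF bV] by simp
  have tl: "t < length (sl W)" "sl W ! t = b" using split by (simp_all add: t_def nth_append)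
  have st: "s = t"
    using nth_eq_iff_index_eq[of "sl W" s t] s tl by (simp add: b_def)
  have td: "take s (sl W) @ drop (Suc s) (sl W) = sl V"
    using split st by (simp add: t_def takeWhile_dropWhile_id)
  have G: "gamma b ** gp (sl V) = (-1) ^ s *\<^sub>R gp (sl W)"
    using Gins[OF b7, of "sl V"] Ck_sub[OF W] finV bV slW st
    by (auto simp: sig_def t_def V_def)
  show ?thesis
    unfolding b_def[symmetric] V_def[symmetric] td
    by (simp add: mm_scaleR_right G)
qed

lemma R2: "form_act gamma (Suc k) (wedge1 X \<beta>) = (\<Sum>b<7. coord7 X b *\<^sub>R (gamma b ** SS k (\<lambda>V. b \<notin> V) \<beta>))"
proof -
  define h where "h W b = coord7 X b *\<^sub>R (gamma b ** (\<beta> (sl (W - {b})) *\<^sub>R gp (sl (W - {b}))))" for W b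
  have e0: "form_act gamma (Suc k) (wedge1 X \<beta>) = (\<Sum>W\<in>Ck (Suc k). \<Sum>s<length (sl W).
       ((-1) ^ s * coord7 X (sl W ! s) * \<beta> (take s (sl W) @ drop (Suc s) (sl W))) *\<^sub>R gp (sl W))"
    unfolding form_act_def wedge1_def Ck_def[symmetric] scaleR_sum_left ..
  have "form_act gamma (Suc k) (wedge1 X \<beta>) = (\<Sum>W\<in>Ck (Suc k). \<Sum>s<length (sl W). h W (sl W ! s))"
    unfolding e0
  proof (rule sum.cong[OF refl], rule sum.cong[OF refl])
    fix W s assume W: "W \<in> Ck (Suc k)" and s: "s \<in> {..<length (sl W)}"
    show "((-1) ^ s * coord7 X (sl W ! s) * \<beta> (take s (sl W) @ drop (Suc s) (sl W))) *\<^sub>R gp (sl W) = h W (sl W ! s)"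
      unfolding h_def using W s by (intro WP) simp_all
  qed
  also have "\<dots> = (\<Sum>W\<in>Ck (Suc k). \<Sum>b\<in>W. h W b)"
  proof (rule sum.cong[OF refl])
    fix W assume W: "W \<in> Ck (Suc k)"
    have fin: "finite W" using Ck_finite_mem[OF W] .
    show "(\<Sum>s<length (sl W). h W (sl W ! s)) = (\<Sum>b\<in>W. h W b)"
      using sum.reindex_bij_betw[OF bij_betw_nth[of "sl W" "{..<length (sl W)}" "set (sl W)"], of "h W"] fin
      by simp
  qed
  also have "\<dots> = (\<Sum>W\<in>Ck (Suc k). \<Sum>b<7. if b \<in> W then h W b else 0)"
  proof (rule sum.cong[OF refl])
    fix W assume W: "W \<in> Ck (Suc k)"
    show "(\<Sum>b\<in>W. h W b) = (\<Sum>b<7. if b \<in> W then h W b else 0)"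
    proof -
      have eq: "{b \<in> {..<7}. b \<in> W} = W" using Ck_sub[OF W] by auto
      have "(\<Sum>b<7. if b \<in> W then h W b else 0) = (\<Sum>b\<in>{b \<in> {..<7}. b \<in> W}. h W b)"
        by (rule sum.inter_filter[symmetric]) simp
      thus ?thesis unfolding eq by simp
    qed
  qed
  also have "\<dots> = (\<Sum>b<7. \<Sum>W\<in>Ck (Suc k). if b \<in> W then h W b else 0)"
    by (rule sum.swap)
  also have "\<dots> = (\<Sum>b<7. coord7 X b *\<^sub>R (gamma b ** SS k (\<lambda>V. b \<notin> V) \<beta>))"
  proof (rule sum.cong[OF refl])
    fix b assume "b \<in> {..<7::nat}"
    hence b: "b < 7" by simp
    have "(\<Sum>W\<in>Ck (Suc k). if b \<in> W then h W b else 0) = (\<Sum>W\<in>{W\<in>Ck (Suc k). b \<in> W}. h W b)"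
      by (simp add: sum.inter_filter)
    also have "\<dots> = (\<Sum>T\<in>{T\<in>Ck k. b \<notin> T}. h (insert b T) b)" by (rule RI[OF b])
    also have "\<dots> = (\<Sum>T\<in>{T\<in>Ck k. b \<notin> T}. coord7 X b *\<^sub>R (gamma b ** (\<beta> (sl T) *\<^sub>R gp (sl T))))"
      by (intro sum.cong refl) (auto simp: h_def)
    also have "\<dots> = coord7 X b *\<^sub>R (gamma b ** SS k (\<lambda>V. b \<notin> V) \<beta>)"
      by (simp add: SS_def sum.inter_filter[symmetric] scaleR_right.sum mm_sum_right)
    finally show "(\<Sum>W\<in>Ck (Suc k). if b \<in> W then h W b else 0) = coord7 X b *\<^sub>R (gamma b ** SS k (\<lambda>V. b \<notin> V) \<beta>)" .
  qed
  finally show ?thesis .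
qed

end


lemma mat1_nz: "(mat 1 :: real^8^8) \<noteq> 0"
proof
  assume "(mat 1 :: real^8^8) = 0"
  hence "(mat 1 :: real^8^8) $ 0 $ 0 = 0" by simp
  thus False by (simp add: mat_def)
qed

lemma len2: "length l = 2 \<Longrightarrow> \<exists>x y. l = [x, y]"
  by (metis length_0_conv length_Suc_conv numeral_2_eq_2)

lemma len3: "length l = 3 \<Longrightarrow> \<exists>x y z. l = [x, y, z]"
  by (metis length_0_conv length_Suc_conv numeral_3_eq_3)

lemma L3: "(\<Sum>xs\<in>Lk 3. f xs) = (\<Sum>a<7. \<Sum>b<7. \<Sum>c<7. f [a, b, c])"
  by (simp add: numeral_3_eq_3 Lk_Suc Lk_0)

lemma L2: "(\<Sum>xs\<in>Lk 2. f xs) = (\<Sum>a<7. \<Sum>b<7. f [a, b])"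
  by (simp add: numeral_2_eq_2 Lk_Suc Lk_0)

lemma sum3_pull: "(\<Sum>a\<in>A. \<Sum>b\<in>B. \<Sum>c\<in>C. f a b c * (s * g a b c)) = (s::real) * (\<Sum>a\<in>A. \<Sum>b\<in>B. \<Sum>c\<in>C. f a b c * g a b c)"
proof -
  have e: "\<And>a b c. f a b c * (s * g a b c) = s * (f a b c * g a b c)" by (simp add: algebra_simps)
  show ?thesis by (simp add: e sum_distrib_left)
qed

context G7 begin

abbreviation hs where "hs \<equiv> hodge3 om"

lemma gp_mv_Cons: "gp (a # l) *v y = gamma a *v (gp l *v y)"
  by (simp add: matrix_vector_mul_assoc)

lemma gp_mv_Nil: "gp [] *v y = y" by simp

lemma sort_sl: "distinct xs \<Longrightarrow> sort xs = sl (set xs)"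
  by (simp add: sorted_list_of_set_sort_remdups distinct_remdups_id)

lemma om_sort: "distinct xs \<Longrightarrow> set xs \<subseteq> {..<7} \<Longrightarrow> om xs = psgn xs * om (sort xs)"
  using Gsort[of xs] by (simp add: omega3_def mv_scale_left)

lemma om_b_sort: "distinct xs \<Longrightarrow> set xs \<subseteq> {..<7} \<Longrightarrow> om (b # xs) = psgn xs * om (b # sort xs)"
  using Gsort[of xs] by (simp add: omega3_def mv_scale_left mm_scaleR_right)

lemma om_ins: "b < 7 \<Longrightarrow> set ys \<subseteq> {..<7} \<Longrightarrow> b \<notin> set ys \<Longrightarrow> om (b # ys) = sig b ys * om (insort b ys)"
  using Gins[of b ys] by (simp add: omega3_def mv_scale_left)

lemma levi_ins:
  assumes "b < 7" "set ys \<subseteq> {..<7}" "b \<notin> set ys"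
  shows "levi (A @ b # ys) = sig b ys * levi (A @ insort b ys)"
proof -
  have c: "(length (A @ b # ys) = 7 \<and> set (A @ b # ys) = {..<7}) = (length (A @ insort b ys) = 7 \<and> set (A @ insort b ys) = {..<7})"
    by (simp add: length_insort set_insort_key)
  have g: "gp (A @ b # ys) = sig b ys *\<^sub>R gp (A @ insort b ys)"
    using Gins[OF assms] by (simp add: gp_append mm_scaleR_right)
  have "levi (A @ b # ys) *\<^sub>R mat 1 = (sig b ys * levi (A @ insort b ys)) *\<^sub>R (mat 1 :: real^8^8)"
    unfolding LV scaleR_scaleR[symmetric] c by (simp add: g)
  thus ?thesis using mat1_nz by simp
qed

lemma levi_nd: "\<not> distinct xs \<Longrightarrow> levi xs = 0"
proof -
  assume nd: "\<not> distinct xs"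
  have "\<not> (length xs = 7 \<and> set xs = {..<7})"
  proof
    assume h: "length xs = 7 \<and> set xs = {..<7}"
    hence "card (set xs) = length xs" by simp
    thus False using nd card_distinct by blast
  qed
  thus ?thesis unfolding levi_psgn by (rule if_not_P)
qed

lemma hs_ins:
  assumes "b < 7" "set ys \<subseteq> {..<7}" "b \<notin> set ys"
  shows "hs (b # ys) = sig b ys * hs (insort b ys)"
  unfolding hodge3_def
  by (simp only: levi_ins[OF assms] sum3_pull)

lemma hs_zero: "b \<in> set ys \<Longrightarrow> hs (b # ys) = 0"
  by (simp add: hodge3_def levi_nd)

lemma F2b: "b < 7 \<Longrightarrow> form_act gamma 2 (\<lambda>l. om (b # l)) = - (gamma b ** SS 3 (\<lambda>J. b \<in> J) om)"
proof -
  assume b: "b < 7"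
  have "form_act gamma 2 (\<lambda>l. om (b # l)) = - (gamma b ** SS (Suc 2) (\<lambda>J. b \<in> J) om)"
  proof (rule R3[OF b])
    fix T assume T: "T \<in> Ck 2" "b \<in> T"
    have "length (sl T) = 2" using Ck_card[OF T(1)] by simp
    then obtain x y where xy: "sl T = [x, y]" using len2 by blast
    have "set (sl T) = T" using Ck_finite_mem[OF T(1)] by simp
    hence "x < 7" "y < 7" "b \<in> {x, y}" using xy Ck_sub[OF T(1)] T(2) by auto
    thus "om (b # sl T) = 0" using xy b by (simp only: xy) (rule om_zero; auto)
  next
    fix T assume T: "T \<in> Ck 2" "b \<notin> T"
    thus "om (b # sl T) = sig b (sl T) * om (insort b (sl T))"
      using om_ins[OF b] Ck_sub[OF T(1)] Ck_finite_mem[OF T(1)] by simp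
  qed
  thus ?thesis by (simp add: numeral_3_eq_3 numeral_2_eq_2)
qed

lemma F3b: "b < 7 \<Longrightarrow> form_act gamma 3 (\<lambda>l. hs (b # l)) = - (gamma b ** SS 4 (\<lambda>J. b \<in> J) hs)"
proof -
  assume b: "b < 7"
  have "form_act gamma 3 (\<lambda>l. hs (b # l)) = - (gamma b ** SS (Suc 3) (\<lambda>J. b \<in> J) hs)"
  proof (rule R3[OF b])
    fix T assume T: "T \<in> Ck 3" "b \<in> T"
    thus "hs (b # sl T) = 0" using Ck_finite_mem[OF T(1)] by (intro hs_zero) simp
  next
    fix T assume T: "T \<in> Ck 3" "b \<notin> T"
    thus "hs (b # sl T) = sig b (sl T) * hs (insort b (sl T))"
      using hs_ins[OF b] Ck_sub[OF T(1)] Ck_finite_mem[OF T(1)] by simp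
  qed
  thus ?thesis by (simp add: numeral_3_eq_3 numeral_Bit0)
qed

end


context G7 begin

lemma cube: "distinct [a, b, c] \<Longrightarrow> a < 7 \<Longrightarrow> b < 7 \<Longrightarrow> c < 7 \<Longrightarrow> gp [a, b, c] ** gp [a, b, c] = mat 1"
proof -
  assume d: "distinct [a, b, c]" and abc: "a < 7" "b < 7" "c < 7"
  have "(gp [a, b, c] ** gp [a, b, c]) *v x = mat 1 *v x" for x
  proof -
    have "(gp [a, b, c] ** gp [a, b, c]) *v x
        = gamma a *v (gamma b *v (gamma c *v (gamma a *v (gamma b *v (gamma c *v x)))))"
      by (simp add: matrix_vector_mul_assoc[symmetric])
    also have "\<dots> = x"
      using d abc antiv[of c a] antiv[of b a] antiv[of c b] sqv[of a] sqv[of b] sqv[of c]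
      by (simp add: vec.neg)
    finally show ?thesis by simp
  qed
  thus ?thesis by (simp add: matrix_eq)
qed

lemma HI_pt:
  assumes xs: "xs \<in> Lk 3" and V: "V \<in> Ck 4"
  shows "levi (xs @ sl V) *\<^sub>R gp (sl V) = (if V = {..<7} - set xs \<and> distinct xs then gp xs else 0)"
proof -
  have fV: "finite V" using Ck_finite_mem[OF V] .
  have xs7: "set xs \<subseteq> {..<7}" "length xs = 3" using xs by (auto simp: Lk_def)
  have V7: "V \<subseteq> {..<7}" "card V = 4" using V by (auto simp: Ck_def)
  have len: "length (xs @ sl V) = 7" using xs7 V7 fV by simp
  have setx: "set (xs @ sl V) = set xs \<union> V" using fV by simp
  have iff: "(set xs \<union> V = {..<7}) = (V = {..<7} - set xs \<and> distinct xs)"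
  proof
    assume h: "set xs \<union> V = {..<7}"
    have "7 = card (set xs \<union> V)" using h by simp
    also have "\<dots> \<le> card (set xs) + card V" by (rule card_Un_le)
    finally have c3: "card (set xs) \<ge> 3" using V7 by simp
    have "card (set xs) \<le> 3" using card_length[of xs] xs7 by simp
    hence dx: "distinct xs" using c3 xs7 card_distinct[of xs] by simp
    have sub: "{..<7} - set xs \<subseteq> V" using h by auto
    have "card ({..<7} - set xs) = 4" using xs7 dx by (simp add: card_Diff_subset distinct_card)
    hence "{..<7} - set xs = V" using card_subset_eq[OF fV sub] V7 by simp
    thus "V = {..<7} - set xs \<and> distinct xs" using dx by simp
  next
    assume "V = {..<7} - set xs \<and> distinct xs"
    thus "set xs \<union> V = {..<7}" using xs7 by auto
  qed
  show ?thesis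
  proof (cases "V = {..<7} - set xs \<and> distinct xs")
    case True
    hence dx: "distinct xs" by simp
    obtain a b c where abc: "xs = [a, b, c]" using len3 xs7 by blast
    have lv: "levi (xs @ sl V) *\<^sub>R mat 1 = gp xs ** gp (sl V)"
      using LV[of "xs @ sl V"] len setx iff True by (simp add: gp_append)
    have ps: "levi (xs @ sl V) * levi (xs @ sl V) = 1"
    proof -
      have "distinct (xs @ sl V)" using len setx iff True
        by (metis card_distinct card_lessThan)
      thus ?thesis using len setx iff True by (simp add: levi_psgn psgn_sq)
    qed
    have cu: "gp xs ** gp xs = mat 1" using cube[of a b c] dx xs7 abc by simp
    have "gp (sl V) = gp xs ** (gp xs ** gp (sl V))" using cu by (simp add: matrix_mul_assoc)
    also have "\<dots> = levi (xs @ sl V) *\<^sub>R gp xs" by (simp add: lv[symmetric] mm_scaleR_right)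
    finally have "levi (xs @ sl V) *\<^sub>R gp (sl V) = (levi (xs @ sl V) * levi (xs @ sl V)) *\<^sub>R gp xs"
      by simp
    thus ?thesis using ps True by simp
  next
    case False
    have "\<not> (length (xs @ sl V) = 7 \<and> set (xs @ sl V) = {..<7})" using False iff setx by simp
    hence "levi (xs @ sl V) = 0" unfolding levi_psgn by (rule if_not_P)
    thus ?thesis by (simp only: if_not_P[OF False]) simp
  qed
qed

lemma HI:
  assumes xs: "xs \<in> Lk 3"
  shows "(\<Sum>V\<in>Ck 4. if Q V then levi (xs @ sl V) *\<^sub>R gp (sl V) else 0)
       = (if distinct xs \<and> Q ({..<7} - set xs) then gp xs else 0)"
proof -
  have xs7: "set xs \<subseteq> {..<7}" "length xs = 3" using xs by (auto simp: Lk_def)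
  have "(\<Sum>V\<in>Ck 4. if Q V then levi (xs @ sl V) *\<^sub>R gp (sl V) else 0)
      = (\<Sum>V\<in>Ck 4. if {..<7} - set xs = V then (if Q V \<and> distinct xs then gp xs else 0) else 0)"
    by (rule sum.cong[OF refl]) (auto simp: HI_pt[OF xs])
  also have "\<dots> = (if {..<7} - set xs \<in> Ck 4 then (if Q ({..<7} - set xs) \<and> distinct xs then gp xs else 0) else 0)"
    by (rule sum.delta'[OF finite_Ck])
  also have "\<dots> = (if distinct xs \<and> Q ({..<7} - set xs) then gp xs else 0)"
  proof (cases "distinct xs")
    case True
    hence "card ({..<7} - set xs) = 4" using xs7 by (simp add: card_Diff_subset distinct_card)
    hence "{..<7} - set xs \<in> Ck 4" by (simp add: Ck_def)
    thus ?thesis by auto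
  qed simp
  finally show ?thesis .
qed

end


context G7 begin

lemma hs_L3: "hs l = (1/6) * (\<Sum>xs\<in>Lk 3. om xs * levi (xs @ l))"
  by (simp add: hodge3_def L3)

lemma om_gp_sort: "distinct xs \<Longrightarrow> set xs \<subseteq> {..<7} \<Longrightarrow> om xs *\<^sub>R gp xs = om (sl (set xs)) *\<^sub>R gp (sl (set xs))"
proof -
  assume d: "distinct xs" and s: "set xs \<subseteq> {..<7}"
  have "om xs *\<^sub>R gp xs = (psgn xs * psgn xs) *\<^sub>R (om (sort xs) *\<^sub>R gp (sort xs))"
    using om_sort[OF d s] Gsort[OF d s] by (simp add: algebra_simps)
  thus ?thesis using d by (simp add: psgn_sq sort_sl)
qed

lemma HD: "SS 4 Q hs = SS 3 (\<lambda>U. Q ({..<7} - U)) om"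
proof -
  have pw: "(if Q V then hs (sl V) *\<^sub>R gp (sl V) else 0)
      = (1/6) *\<^sub>R (\<Sum>xs\<in>Lk 3. om xs *\<^sub>R (if Q V then levi (xs @ sl V) *\<^sub>R gp (sl V) else 0))" for V
    by (cases "Q V") (simp_all add: hs_L3 scaleR_sum_left scaleR_right.sum sum_distrib_left)
  have "SS 4 Q hs = (\<Sum>V\<in>Ck 4. (1/6) *\<^sub>R (\<Sum>xs\<in>Lk 3. om xs *\<^sub>R (if Q V then levi (xs @ sl V) *\<^sub>R gp (sl V) else 0)))"
    unfolding SS_def by (simp only: pw)
  also have "\<dots> = (1/6) *\<^sub>R (\<Sum>V\<in>Ck 4. \<Sum>xs\<in>Lk 3. om xs *\<^sub>R (if Q V then levi (xs @ sl V) *\<^sub>R gp (sl V) else 0))"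
    by (simp only: scaleR_right.sum)
  also have "\<dots> = (1/6) *\<^sub>R (\<Sum>xs\<in>Lk 3. \<Sum>V\<in>Ck 4. om xs *\<^sub>R (if Q V then levi (xs @ sl V) *\<^sub>R gp (sl V) else 0))"
    by (subst sum.swap) (rule refl)
  also have "\<dots> = (1/6) *\<^sub>R (\<Sum>xs\<in>Lk 3. om xs *\<^sub>R (\<Sum>V\<in>Ck 4. if Q V then levi (xs @ sl V) *\<^sub>R gp (sl V) else 0))"
    by (simp only: scaleR_right.sum)
  also have "\<dots> = (1/6) *\<^sub>R (\<Sum>xs\<in>Lk 3. om xs *\<^sub>R (if distinct xs \<and> Q ({..<7} - set xs) then gp xs else 0))"
    by (simp add: HI)
  also have "\<dots> = (1/6) *\<^sub>R (\<Sum>xs\<in>Lk 3. if distinct xs \<and> Q ({..<7} - set xs) then om xs *\<^sub>R gp xs else 0)"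
    by (simp add: if_distrib cong: if_cong)
  also have "(\<Sum>xs\<in>Lk 3. if distinct xs \<and> Q ({..<7} - set xs) then om xs *\<^sub>R gp xs else 0)
      = (\<Sum>U\<in>{U\<in>Ck 3. Q ({..<7} - U)}. fact 3 *\<^sub>R (om (sl U) *\<^sub>R gp (sl U)))"
    by (rule CV[where F' = "\<lambda>U. om (sl U) *\<^sub>R gp (sl U)"]) (rule om_gp_sort)
  also have "(1/6::real) *\<^sub>R (\<Sum>U\<in>{U\<in>Ck 3. Q ({..<7} - U)}. fact 3 *\<^sub>R (om (sl U) *\<^sub>R gp (sl U)))
      = (\<Sum>U\<in>{U\<in>Ck 3. Q ({..<7} - U)}. om (sl U) *\<^sub>R gp (sl U))"
    by (simp add: scaleR_right.sum fact_numeral)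
  also have "\<dots> = SS 3 (\<lambda>U. Q ({..<7} - U)) om"
    by (simp add: SS_def sum.inter_filter)
  finally show ?thesis .
qed

lemma F2v: "b < 7 \<Longrightarrow> form_act gamma 2 (\<lambda>l. om (b # l)) *v Psi = 3 *\<^sub>R gv b"
proof -
  assume b: "b < 7"
  have "form_act gamma 2 (\<lambda>l. om (b # l)) = (\<Sum>U\<in>{U\<in>Ck 2. True}. om (b # sl U) *\<^sub>R gp (sl U))"
    by (simp add: form_act_def Ck_def)
  also have "\<dots> = (1/2) *\<^sub>R (\<Sum>U\<in>{U\<in>Ck 2. True}. fact 2 *\<^sub>R (om (b # sl U) *\<^sub>R gp (sl U)))"
    by (simp add: scaleR_right.sum fact_numeral)
  also have "(\<Sum>U\<in>{U\<in>Ck 2. True}. fact 2 *\<^sub>R (om (b # sl U) *\<^sub>R gp (sl U)))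
     = (\<Sum>xs\<in>Lk 2. if distinct xs \<and> True then om (b # xs) *\<^sub>R gp xs else 0)"
  proof (rule CV[symmetric])
    fix xs :: "nat list" assume d: "distinct xs" and s: "set xs \<subseteq> {..<7}"
    have "om (b # xs) *\<^sub>R gp xs = (psgn xs * psgn xs) *\<^sub>R (om (b # sort xs) *\<^sub>R gp (sort xs))"
      using om_b_sort[OF d s] Gsort[OF d s] by (simp add: algebra_simps)
    thus "om (b # xs) *\<^sub>R gp xs = om (b # sl (set xs)) *\<^sub>R gp (sl (set xs))"
      using d by (simp add: psgn_sq sort_sl)
  qed
  also have "\<dots> = (\<Sum>xs\<in>Lk 2. om (b # xs) *\<^sub>R gp xs)"
  proof (rule sum.cong[OF refl])
    fix xs assume xs: "xs \<in> Lk 2"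
    obtain j k where jk: "xs = [j, k]" using len2[of xs] xs by (auto simp: Lk_def)
    have "j < 7" "k < 7" using xs jk by (auto simp: Lk_def)
    thus "(if distinct xs \<and> True then om (b # xs) *\<^sub>R gp xs else 0) = om (b # xs) *\<^sub>R gp xs"
      using om_zero[of b j k] b jk by auto
  qed
  also have "\<dots> = (\<Sum>j<7. \<Sum>k<7. om [b, j, k] *\<^sub>R gp [j, k])" by (simp add: L2)
  finally have "form_act gamma 2 (\<lambda>l. om (b # l)) *v Psi
      = (1/2) *\<^sub>R (\<Sum>j<7. \<Sum>k<7. om [b, j, k] *\<^sub>R (gamma j *v (gamma k *v Psi)))"
    by (simp add: mv_sum_left mv_scale_left matrix_vector_mul_assoc)
  also have "\<dots> = 3 *\<^sub>R gv b" using K[OF b] by simp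
  finally show ?thesis .
qed

end


context G7 begin

lemma SS_cong: "(\<And>J. J \<in> Ck k \<Longrightarrow> P J = P' J) \<Longrightarrow> SS k P \<alpha> = SS k P' \<alpha>"
  unfolding SS_def by (rule sum.cong) auto

lemma SS_split: "SS k P \<alpha> + SS k (\<lambda>J. \<not> P J) \<alpha> = SS k (\<lambda>_. True) \<alpha>"
  unfolding SS_def sum.distrib[symmetric] by (rule sum.cong) auto

lemma SS_sum: "(\<Sum>b<7. SS 3 (\<lambda>J. b \<in> J) \<alpha>) = 3 *\<^sub>R SS 3 (\<lambda>_. True) \<alpha>"
proof -
  have "(\<Sum>b<7. SS 3 (\<lambda>J. b \<in> J) \<alpha>) = (\<Sum>J\<in>Ck 3. \<Sum>b<7. if b \<in> J then \<alpha> (sl J) *\<^sub>R gp (sl J) else 0)"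
    unfolding SS_def by (rule sum.swap)
  also have "\<dots> = (\<Sum>J\<in>Ck 3. 3 *\<^sub>R (\<alpha> (sl J) *\<^sub>R gp (sl J)))"
  proof (rule sum.cong[OF refl])
    fix J assume J: "J \<in> Ck 3"
    have eq: "{b \<in> {..<7}. b \<in> J} = J" using Ck_sub[OF J] by auto
    have "(\<Sum>b<7. if b \<in> J then \<alpha> (sl J) *\<^sub>R gp (sl J) else 0) = (\<Sum>b\<in>{b \<in> {..<7}. b \<in> J}. \<alpha> (sl J) *\<^sub>R gp (sl J))"
      by (rule sum.inter_filter[symmetric]) simp
    also have "\<dots> = real (card J) *\<^sub>R (\<alpha> (sl J) *\<^sub>R gp (sl J))" unfolding eq by (rule sum_constant_scaleR)
    finally show "(\<Sum>b<7. if b \<in> J then \<alpha> (sl J) *\<^sub>R gp (sl J) else 0) = 3 *\<^sub>R (\<alpha> (sl J) *\<^sub>R gp (sl J))"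
      using Ck_card[OF J] by simp
  qed
  also have "\<dots> = 3 *\<^sub>R SS 3 (\<lambda>_. True) \<alpha>" by (simp add: SS_def scaleR_right.sum)
  finally show ?thesis .
qed

lemma Sb: "b < 7 \<Longrightarrow> SS 3 (\<lambda>J. b \<in> J) om *v Psi = (-3) *\<^sub>R Psi"
proof -
  assume b: "b < 7"
  let ?S = "SS 3 (\<lambda>J. b \<in> J) om"
  have "- (gamma b *v (?S *v Psi)) = 3 *\<^sub>R gv b"
    using F2v[OF b] F2b[OF b] by (simp add: mv_neg_left matrix_vector_mul_assoc)
  hence h: "gamma b *v (?S *v Psi) = (-3) *\<^sub>R gv b" by (simp add: minus_equation_iff[of "gamma b *v _"])
  have "?S *v Psi = - (gamma b *v (gamma b *v (?S *v Psi)))" using sqv[OF b] by simp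
  also have "\<dots> = (-3) *\<^sub>R Psi" unfolding h using sqv[OF b] by (simp add: matrix_vector_mult_scaleR vec.neg)
  finally show ?thesis .
qed

lemma Omv: "SS 3 (\<lambda>_. True) om *v Psi = (-7) *\<^sub>R Psi"
proof -
  have "3 *\<^sub>R (SS 3 (\<lambda>_. True) om *v Psi) = (\<Sum>b<7. SS 3 (\<lambda>J. b \<in> J) om *v Psi)"
    by (simp only: mv_sum_left[symmetric] SS_sum mv_scale_left)
  also have "\<dots> = (\<Sum>b<(7::nat). (-3) *\<^sub>R Psi)" by (rule sum.cong) (auto simp: Sb)
  also have "\<dots> = 3 *\<^sub>R ((-7) *\<^sub>R Psi)" by simp
  finally have "3 *\<^sub>R (SS 3 (\<lambda>_. True) om *v Psi) = 3 *\<^sub>R ((-7) *\<^sub>R Psi)" .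
  thus ?thesis by (metis scaleR_cancel_left zero_neq_numeral)
qed

lemma Tb: "b < 7 \<Longrightarrow> SS 3 (\<lambda>J. b \<notin> J) om *v Psi = (-4) *\<^sub>R Psi"
proof -
  assume b: "b < 7"
  have "SS 3 (\<lambda>J. b \<notin> J) om = SS 3 (\<lambda>_. True) om - SS 3 (\<lambda>J. b \<in> J) om"
    using SS_split[of 3 "\<lambda>J. b \<in> J" om] by (simp add: algebra_simps)
  hence "SS 3 (\<lambda>J. b \<notin> J) om *v Psi = (-7) *\<^sub>R Psi - (-3) *\<^sub>R Psi"
    by (simp only: Omv Sb[OF b] matrix_vector_mult_diff_rdistrib)
  also have "\<dots> = ((-7) - (-3)) *\<^sub>R Psi" by (simp only: scaleR_left_diff_distrib)
  finally show ?thesis by simp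
qed

lemma cliffv: "cliff_vec gamma X *v Psi = (\<Sum>b<7. coord7 X b *\<^sub>R gv b)"
  by (simp add: cliff_vec_def mv_sum_left mv_scale_left)

lemma F2X: "form_act gamma 2 (contr X om) *v Psi = 3 *\<^sub>R (cliff_vec gamma X *v Psi)"
  unfolding form_act_contr cliffv
  by (simp add: mv_sum_left mv_scale_left F2v scaleR_right.sum mult.commute)

lemma F3X: "form_act gamma 3 (contr X hs) *v Psi = 4 *\<^sub>R (cliff_vec gamma X *v Psi)"
proof -
  have "form_act gamma 3 (\<lambda>l. hs (b # l)) *v Psi = 4 *\<^sub>R gv b" if b: "b < 7" for b
  proof -
    have "SS 4 (\<lambda>J. b \<in> J) hs = SS 3 (\<lambda>U. b \<in> {..<7} - U) om" by (rule HD)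
    also have "\<dots> = SS 3 (\<lambda>U. b \<notin> U) om" using b by (intro SS_cong) auto
    finally show ?thesis using F3b[OF b] Tb[OF b]
      by (simp add: mv_neg_left matrix_vector_mul_assoc[symmetric] matrix_vector_mult_scaleR vec.neg)
  qed
  thus ?thesis unfolding form_act_contr cliffv
    by (simp add: mv_sum_left mv_scale_left scaleR_right.sum mult.commute)
qed

lemma F5X: "form_act gamma 5 (wedge1 X hs) *v Psi = (-3) *\<^sub>R (cliff_vec gamma X *v Psi)"
proof -
  have "gamma b ** SS 4 (\<lambda>V. b \<notin> V) hs *v Psi = (-3) *\<^sub>R gv b" if b: "b < 7" for b
  proof -
    have "SS 4 (\<lambda>V. b \<notin> V) hs = SS 3 (\<lambda>U. b \<notin> {..<7} - U) om" by (rule HD)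
    also have "\<dots> = SS 3 (\<lambda>U. b \<in> U) om" using b by (intro SS_cong) auto
    finally show ?thesis using Sb[OF b]
      by (simp add: matrix_vector_mul_assoc[symmetric] matrix_vector_mult_scaleR vec.neg)
  qed
  moreover have "form_act gamma 5 (wedge1 X hs) = (\<Sum>b<7. coord7 X b *\<^sub>R (gamma b ** SS 4 (\<lambda>V. b \<notin> V) hs))"
    using R2[of 4 X hs] by (simp add: numeral_Bit1)
  ultimately show ?thesis unfolding cliffv
    by (simp add: mv_sum_left mv_scale_left scaleR_right.sum mult.commute)
qed

lemma key: "(cliff_vec gamma X
             + (r / 4) *\<^sub>R form_act gamma 2 (contr X (omega3 gamma Psi))
             + p *\<^sub>R form_act gamma 3 (contr X (hodge3 (omega3 gamma Psi)))
             + q *\<^sub>R form_act gamma 5 (wedge1 X (hodge3 (omega3 gamma Psi)))) *v Psi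
           = (1 + 3 * r / 4 + 4 * p - 3 * q) *\<^sub>R (cliff_vec gamma X *v Psi)"
  by (simp add: mv_add_left mv_scale_left F2X F3X F5X algebra_simps)

end


theorem mainTheorem3:
  fixes gamma :: "nat \<Rightarrow> real^8^8" and Psi :: "real^8" and p q r :: real
  assumes clifford: "\<forall>i<7. \<forall>j<7. gamma i ** gamma j + gamma j ** gamma i
                       = (if i = j then -2 else 0) *\<^sub>R mat 1"
      and skew: "\<forall>i<7. transpose (gamma i) = - gamma i"
      and orientation: "gprod gamma [0..<7] = mat 1"
      and unit: "norm Psi = 1"
  shows "(\<forall>X :: real^7.
            (cliff_vec gamma X
             + (r / 4) *\<^sub>R form_act gamma 2 (contr X (omega3 gamma Psi))
             + p *\<^sub>R form_act gamma 3 (contr X (hodge3 (omega3 gamma Psi)))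
             + q *\<^sub>R form_act gamma 5 (wedge1 X (hodge3 (omega3 gamma Psi)))) *v Psi = 0)
         \<longleftrightarrow> 16 * p = -4 + 12 * q - 3 * r"
proof -
  interpret G7 gamma Psi
    by unfold_locales (fact clifford, fact skew, fact orientation, fact unit)
  let ?k = "1 + 3 * r / 4 + 4 * p - 3 * q"
  define X1 :: "real^7" where "X1 = (\<chi> i. 1)"
  have nz: "cliff_vec gamma X1 *v Psi \<noteq> 0"
  proof
    assume h: "cliff_vec gamma X1 *v Psi = 0"
    have "(cliff_vec gamma X1 *v Psi) \<bullet> gv 0 = (\<Sum>b<(7::nat). if b = 0 then 1 else (0::real))"
      unfolding cliffv by (simp add: inner_sum_left o2 coord7_def X1_def)
    also have "\<dots> = 1" by simp
    finally show False using h by simp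
  qed
  show ?thesis
  proof
    assume "\<forall>X :: real^7.
            (cliff_vec gamma X
             + (r / 4) *\<^sub>R form_act gamma 2 (contr X (omega3 gamma Psi))
             + p *\<^sub>R form_act gamma 3 (contr X (hodge3 (omega3 gamma Psi)))
             + q *\<^sub>R form_act gamma 5 (wedge1 X (hodge3 (omega3 gamma Psi)))) *v Psi = 0"
    hence "?k *\<^sub>R (cliff_vec gamma X1 *v Psi) = 0" using key[of X1 r p q] by simp
    hence "?k = 0" using nz by simp
    thus "16 * p = -4 + 12 * q - 3 * r" by linarith
  next
    assume "16 * p = -4 + 12 * q - 3 * r"
    hence "?k = 0" by linarith
    thus "\<forall>X :: real^7.
            (cliff_vec gamma X
             + (r / 4) *\<^sub>R form_act gamma 2 (contr X (omega3 gamma Psi))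
             + p *\<^sub>R form_act gamma 3 (contr X (hodge3 (omega3 gamma Psi)))
             + q *\<^sub>R form_act gamma 5 (wedge1 X (hodge3 (omega3 gamma Psi)))) *v Psi = 0"
      using key by simp
  qed
qed

end
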